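(* Let $(G,R,x_I,x_G)$ be any instance of the multi-robot path planning problem on graphs. Algorithm TOMPP is complete: if the instance has a solution, TOMPP terminates and returns a solution, and otherwise it reports that no solution exists. Moreover, whenever a solution exists, the solution returned by TOMPP has minimum makespan among all solutions of the instance.
   Context: Multi-robot path planning on graphs: $G=(V,E)$ is a connected, undirected, simple graph; $R=\{r_1,\dots,r_n\}$ is a set of robots; $x_I,x_G:R\to V$ are injective maps (initial and goal locations). Let $\mathbb Z^+=\mathbb N\cup\{0\}$. A path is a map $p_i:\mathbb Z^+\to V$. It is feasible for robot $r_i$ if (1) $p_i(0)=x_I(r_i)$; (2) there is a smallest $k_i^{\min}\in\mathbb Z^+$ with $p_i(k)=x_G(r_i)$ for all $k\ge k_i^{\min}$; (3) for all $0\le k<k_i^{\min}$, either $(p_i(k),p_i(k+1))\in E$ or $p_i(k)=p_i(k+1)$. Two paths $p_i,p_j$ ($i\neq j$) collide if there is $k$ with $p_i(k)=p_j(k)$ or $(p_i(k),p_i(k+1))=(p_j(k+1),p_j(k))$. A solution is a set $P=\{p_1,\dots,p_n\}$ with each $p_i$ feasible for $r_i$ and no two paths colliding. Its makespan is $T_P=\max_i k_i^{\min}$. Time-expanded network for a natural number $T$: a directed graph $G'$ whose vertices are, for each $v\in V$, copies $v(0)=v(0)'$, $v(1),v(1)',v(2),v(2)',\dots,v(T),v(T)'$, together with gadget vertices described next. Edges (all of unit capacity): $(v(t),v(t)')$ for $1\le t\le T$ and $(v(t)',v(t+1))$ for $0\le t<T$, for each $v\in V$; for each edge $\{u,v\}\in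 E$ and each $0\le t<T$, two new vertices $a,b$ and edges $u(t)'\to a$, $v(t)'\to a$, $a\to b$, $b\to u(t+1)$, $b\to v(t+1)$; and $n$ loopback edges $e_1,\dots,e_n$, where $e_i$ goes from $x_G(r_i)(T)'$ to $x_I(r_i)(0)$. Index all edges of $G'$ as $e_1,e_2,\dots$ with the loopback edges first. The ILP for $T$ has binary variables $x_{i,j}$ ($1\le i\le n$, $e_j\in G'$), constraints $\sum_{i=1}^n x_{i,j}\le 1$ for every edge $e_j$, $x_{i,j}=0$ for $1\le i,j\le n$, $i\ne j$, and for every vertex $v$ of $G'$ and every $i$, $\sum_{e_j\text{ entering } v}x_{i,j}=\sum_{e_j\text{ leaving }v}x_{i,j}$; objective: maximize $\sum_{i=1}^n x_{i,i}$. Algorithm TOMPP: start with $T=\max_i d_G(x_I(r_i),x_G(r_i))$ (graph distance); build and solve the ILP for $T$; if the optimum equals $n$, output the paths obtained by letting robot $r_i$ be at vertex $v$ at time $t$ when the unit flow of commodity $i$ passes through $v(t)$ (and staying at its goal afterwards); otherwise increase $T$ by one and repeat, reporting that no solution exists once $T$ exceeds a bound (e.g., the number of joint configurations) beyond which no new solutions can appear. *)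

theory Defs
  imports Main
begin

definition simple_connected_graph :: "'v set \<Rightarrow> ('v \<times> 'v) set \<Rightarrow> bool" where
  "simple_connected_graph V E \<longleftrightarrow>
     finite V \<and> E \<subseteq> V \<times> V \<and> sym E \<and> irrefl E \<and> (\<forall>u\<in>V. \<forall>v\<in>V. (u, v) \<in> E\<^sup>*)"

definition mpp_instance ::
  "'v set \<Rightarrow> ('v \<times> 'v) set \<Rightarrow> nat \<Rightarrow> (nat \<Rightarrow> 'v) \<Rightarrow> (nat \<Rightarrow> 'v) \<Rightarrow> bool" where
  "mpp_instance V E n xI xG \<longleftrightarrow>
     simple_connected_graph V E \<and> (\<forall>i<n. xI i \<in> V \<and> xG i \<in> V) \<and>
     inj_on xI {..<n} \<and> inj_on xG {..<n}"

definition kmin :: "(nat \<Rightarrow> 'v) \<Rightarrow> 'v \<Rightarrow> nat" where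
  "kmin p g = (LEAST k. \<forall>k'\<ge>k. p k' = g)"

definition feasible_path :: "('v \<times> 'v) set \<Rightarrow> 'v \<Rightarrow> 'v \<Rightarrow> (nat \<Rightarrow> 'v) \<Rightarrow> bool" where
  "feasible_path E s g p \<longleftrightarrow>
     p 0 = s \<and> (\<exists>k. \<forall>k'\<ge>k. p k' = g) \<and>
     (\<forall>k < kmin p g. (p k, p (Suc k)) \<in> E \<or> p k = p (Suc k))"

definition collide :: "(nat \<Rightarrow> 'v) \<Rightarrow> (nat \<Rightarrow> 'v) \<Rightarrow> bool" where
  "collide p q \<longleftrightarrow> (\<exists>k. p k = q k \<or> (p k, p (Suc k)) = (q (Suc k), q k))"

definition is_solution ::
  "('v \<times> 'v) set \<Rightarrow> nat \<Rightarrow> (nat \<Rightarrow> 'v) \<Rightarrow> (nat \<Rightarrow> 'v) \<Rightarrow> (nat \<Rightarrow> nat \<Rightarrow> 'v) \<Rightarrow> bool" where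
  "is_solution E n xI xG P \<longleftrightarrow>
     (\<forall>i<n. feasible_path E (xI i) (xG i) (P i)) \<and>
     (\<forall>i<n. \<forall>j<n. i \<noteq> j \<longrightarrow> \<not> collide (P i) (P j))"

text \<open>Makespan: maximum of the k_i^min (the maximum of the empty family is taken to be 0).\<close>
definition makespan :: "nat \<Rightarrow> (nat \<Rightarrow> 'v) \<Rightarrow> (nat \<Rightarrow> nat \<Rightarrow> 'v) \<Rightarrow> nat" where
  "makespan n xG P = Max (insert 0 {kmin (P i) (xG i) | i. i < n})"

definition gdist :: "('v \<times> 'v) set \<Rightarrow> 'v \<Rightarrow> 'v \<Rightarrow> nat" where
  "gdist E u v = (LEAST k. (u, v) \<in> E ^^ k)"

text \<open>Nodes: TIn v t = v(t) (t \<ge> 1), TOut v t = v(t)' (with TOut v 0 = v(0) = v(0)'),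
  GadA e t / GadB e t = gadget vertices a, b for the undirected edge e = {u,v} at time t.\<close>
datatype 'v tnode = TIn 'v nat | TOut 'v nat | GadA "'v set" nat | GadB "'v set" nat

text \<open>Edge labels (used instead of the integer indexing e_1, e_2, ...; LoopE i is the
  loopback edge of robot i).\<close>
datatype 'v tedge = LoopE nat | HoldE 'v nat | MoveE 'v nat
  | GInE 'v "'v set" nat | GMidE "'v set" nat | GOutE "'v set" 'v nat

definition uedges :: "('v \<times> 'v) set \<Rightarrow> 'v set set" where
  "uedges E = {{u, v} | u v. (u, v) \<in> E}"

definition tx_edges :: "'v set \<Rightarrow> ('v \<times> 'v) set \<Rightarrow> nat \<Rightarrow> nat \<Rightarrow> 'v tedge set" where
  "tx_edges V E n T =
     LoopE ` {..<n}
     \<union> {HoldE v t | v t. v \<in> V \<and> 1 \<le> t \<and> t \<le> T}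
     \<union> {MoveE v t | v t. v \<in> V \<and> t < T}
     \<union> {GInE w e t | w e t. e \<in> uedges E \<and> w \<in> e \<and> t < T}
     \<union> {GMidE e t | e t. e \<in> uedges E \<and> t < T}
     \<union> {GOutE e w t | e w t. e \<in> uedges E \<and> w \<in> e \<and> t < T}"

fun tx_src :: "(nat \<Rightarrow> 'v) \<Rightarrow> nat \<Rightarrow> 'v tedge \<Rightarrow> 'v tnode" where
  "tx_src xG T (LoopE i) = TOut (xG i) T"
| "tx_src xG T (HoldE v t) = TIn v t"
| "tx_src xG T (MoveE v t) = TOut v t"
| "tx_src xG T (GInE w e t) = TOut w t"
| "tx_src xG T (GMidE e t) = GadA e t"
| "tx_src xG T (GOutE e w t) = GadB e t"

fun tx_tgt :: "(nat \<Rightarrow> 'v) \<Rightarrow> 'v tedge \<Rightarrow> 'v tnode" where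
  "tx_tgt xI (LoopE i) = TOut (xI i) 0"
| "tx_tgt xI (HoldE v t) = TOut v t"
| "tx_tgt xI (MoveE v t) = TIn v (Suc t)"
| "tx_tgt xI (GInE w e t) = GadA e t"
| "tx_tgt xI (GMidE e t) = GadB e t"
| "tx_tgt xI (GOutE e w t) = TIn w (Suc t)"

text \<open>x i e is the binary variable of commodity i (robot r_i) on edge e; variables outside
  the index range are normalised to 0.\<close>
definition ilp_feasible ::
  "'v set \<Rightarrow> ('v \<times> 'v) set \<Rightarrow> nat \<Rightarrow> (nat \<Rightarrow> 'v) \<Rightarrow> (nat \<Rightarrow> 'v) \<Rightarrow> nat
     \<Rightarrow> (nat \<Rightarrow> 'v tedge \<Rightarrow> nat) \<Rightarrow> bool" where
  "ilp_feasible V E n xI xG T x \<longleftrightarrow>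
     (\<forall>i e. (n \<le> i \<or> e \<notin> tx_edges V E n T) \<longrightarrow> x i e = 0) \<and>
     (\<forall>i<n. \<forall>e\<in>tx_edges V E n T. x i e \<le> 1) \<and>
     (\<forall>e\<in>tx_edges V E n T. (\<Sum>i<n. x i e) \<le> 1) \<and>
     (\<forall>i<n. \<forall>j<n. i \<noteq> j \<longrightarrow> x i (LoopE j) = 0) \<and>
     (\<forall>w. \<forall>i<n.
        (\<Sum>e\<in>{e \<in> tx_edges V E n T. tx_tgt xI e = w}. x i e) =
        (\<Sum>e\<in>{e \<in> tx_edges V E n T. tx_src xG T e = w}. x i e))"

definition ilp_obj :: "nat \<Rightarrow> (nat \<Rightarrow> 'v tedge \<Rightarrow> nat) \<Rightarrow> nat" where
  "ilp_obj n x = (\<Sum>i<n. x i (LoopE i))"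

definition ilp_opt ::
  "'v set \<Rightarrow> ('v \<times> 'v) set \<Rightarrow> nat \<Rightarrow> (nat \<Rightarrow> 'v) \<Rightarrow> (nat \<Rightarrow> 'v) \<Rightarrow> nat \<Rightarrow> nat" where
  "ilp_opt V E n xI xG T = Max {ilp_obj n x | x. ilp_feasible V E n xI xG T x}"

definition ilp_optimal ::
  "'v set \<Rightarrow> ('v \<times> 'v) set \<Rightarrow> nat \<Rightarrow> (nat \<Rightarrow> 'v) \<Rightarrow> (nat \<Rightarrow> 'v) \<Rightarrow> nat
     \<Rightarrow> (nat \<Rightarrow> 'v tedge \<Rightarrow> nat) \<Rightarrow> bool" where
  "ilp_optimal V E n xI xG T x \<longleftrightarrow>
     ilp_feasible V E n xI xG T x \<and> ilp_obj n x = ilp_opt V E n xI xG T"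

definition flow_through ::
  "'v set \<Rightarrow> ('v \<times> 'v) set \<Rightarrow> nat \<Rightarrow> (nat \<Rightarrow> 'v) \<Rightarrow> nat
     \<Rightarrow> (nat \<Rightarrow> 'v tedge \<Rightarrow> nat) \<Rightarrow> nat \<Rightarrow> 'v tnode \<Rightarrow> bool" where
  "flow_through V E n xI T x i w \<longleftrightarrow> (\<exists>e\<in>tx_edges V E n T. tx_tgt xI e = w \<and> x i e = 1)"

definition tnode_at :: "'v \<Rightarrow> nat \<Rightarrow> 'v tnode" where
  "tnode_at v t = (if t = 0 then TOut v 0 else TIn v t)"

definition extract_paths ::
  "'v set \<Rightarrow> ('v \<times> 'v) set \<Rightarrow> nat \<Rightarrow> (nat \<Rightarrow> 'v) \<Rightarrow> (nat \<Rightarrow> 'v) \<Rightarrow> nat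
     \<Rightarrow> (nat \<Rightarrow> 'v tedge \<Rightarrow> nat) \<Rightarrow> nat \<Rightarrow> nat \<Rightarrow> 'v" where
  "extract_paths V E n xI xG T x = (\<lambda>i t.
     if t \<le> T then (SOME v. v \<in> V \<and> flow_through V E n xI T x i (tnode_at v t)) else xG i)"

definition tompp_start :: "('v \<times> 'v) set \<Rightarrow> nat \<Rightarrow> (nat \<Rightarrow> 'v) \<Rightarrow> (nat \<Rightarrow> 'v) \<Rightarrow> nat" where
  "tompp_start E n xI xG = Max (insert 0 {gdist E (xI i) (xG i) | i. i < n})"

text \<open>Bound on T: the number of joint configurations is at most |V|^n.\<close>
definition tompp_bound :: "'v set \<Rightarrow> nat \<Rightarrow> nat" where
  "tompp_bound V n = card V ^ n"

text \<open>tompp_result ... res: res is a possible output of TOMPP (the ILP solver may return any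
  optimal solution). Some P: paths P returned; None: "no solution exists" reported.\<close>
definition tompp_result ::
  "'v set \<Rightarrow> ('v \<times> 'v) set \<Rightarrow> nat \<Rightarrow> (nat \<Rightarrow> 'v) \<Rightarrow> (nat \<Rightarrow> 'v)
     \<Rightarrow> (nat \<Rightarrow> nat \<Rightarrow> 'v) option \<Rightarrow> bool" where
  "tompp_result V E n xI xG res \<longleftrightarrow>
     (case res of
       Some P \<Rightarrow> (\<exists>T x. tompp_start E n xI xG \<le> T \<and> T \<le> tompp_bound V n \<and>
                  (\<forall>T'. tompp_start E n xI xG \<le> T' \<and> T' < T \<longrightarrow> ilp_opt V E n xI xG T' \<noteq> n) \<and>
                  ilp_opt V E n xI xG T = n \<and> ilp_optimal V E n xI xG T x \<and>
                  P = extract_paths V E n xI xG T x)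
     | None \<Rightarrow> (\<forall>T. tompp_start E n xI xG \<le> T \<and> T \<le> tompp_bound V n \<longrightarrow>
                  ilp_opt V E n xI xG T \<noteq> n))"

end

theory Submission
  imports Defs "HOL-Library.FuncSet"
begin


lemma tx_mem[simp]:
 "LoopE j \<in> tx_edges V E n T \<longleftrightarrow> j < n"
 "HoldE v t \<in> tx_edges V E n T \<longleftrightarrow> v \<in> V \<and> 1 \<le> t \<and> t \<le> T"
 "MoveE v t \<in> tx_edges V E n T \<longleftrightarrow> v \<in> V \<and> t < T"
 "GInE w e t \<in> tx_edges V E n T \<longleftrightarrow> e \<in> uedges E \<and> w \<in> e \<and> t < T"
 "GMidE e t \<in> tx_edges V E n T \<longleftrightarrow> e \<in> uedges E \<and> t < T"
 "GOutE e w t \<in> tx_edges V E n T \<longleftrightarrow> e \<in> uedges E \<and> w \<in> e \<and> t < T"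
  by (auto simp: tx_edges_def)

lemma uedges_sub: "E \<subseteq> V \<times> V \<Longrightarrow> e \<in> uedges E \<Longrightarrow> e \<subseteq> V"
  by (auto simp: uedges_def)

lemma finite_uedges: "finite E \<Longrightarrow> finite (uedges E)"
proof -
  assume "finite E"
  have "uedges E = (\<lambda>(u,v). {u,v}) ` E" by (auto simp: uedges_def)
  thus ?thesis using \<open>finite E\<close> by simp
qed

lemma finite_tx:
  assumes "finite V" "E \<subseteq> V \<times> V"
  shows "finite (tx_edges V E n T)"
proof -
  have fE: "finite E" using assms finite_subset by blast
  have fU: "finite (uedges E)" using finite_uedges[OF fE] .
  have "tx_edges V E n T \<subseteq> LoopE ` {..<n} \<union> (\<lambda>(v,t). HoldE v t) ` (V \<times> {..T})
     \<union> (\<lambda>(v,t). MoveE v t) ` (V \<times> {..<T}) \<union> (\<lambda>(w,e,t). GInE w e t) ` (V \<times> uedges E \<times> {..<T})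
     \<union> (\<lambda>(e,t). GMidE e t) ` (uedges E \<times> {..<T}) \<union> (\<lambda>(e,w,t). GOutE e w t) ` (uedges E \<times> V \<times> {..<T})"
    using uedges_sub[OF assms(2)] by (auto simp: tx_edges_def image_iff) blast+
  moreover have "finite (LoopE ` {..<n} \<union> (\<lambda>(v,t). HoldE v t) ` (V \<times> {..T})
     \<union> (\<lambda>(v,t). MoveE v t) ` (V \<times> {..<T}) \<union> (\<lambda>(w,e,t). GInE w e t) ` (V \<times> uedges E \<times> {..<T})
     \<union> (\<lambda>(e,t). GMidE e t) ` (uedges E \<times> {..<T}) \<union> (\<lambda>(e,w,t). GOutE e w t) ` (uedges E \<times> V \<times> {..<T}))"
    using assms(1) fU by simp
  ultimately show ?thesis using finite_subset by blast
qed

lemma sum_one_nz: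
  fixes f :: "'a \<Rightarrow> nat"
  assumes "finite A" "\<forall>e\<in>A. f e \<noteq> 0 \<longrightarrow> e = a"
  shows "sum f A = (if a \<in> A then f a else 0)"
proof (cases "a \<in> A")
  case True
  have "sum f A = f a + sum f (A - {a})" using True assms(1) by (simp add: sum.remove)
  moreover have "sum f (A - {a}) = 0" using assms(2) by (intro sum.neutral) auto
  ultimately show ?thesis using True by simp
next
  case False
  have "sum f A = 0" using assms(2) False by (intro sum.neutral) auto
  thus ?thesis using False by simp
qed

lemma sum_two:
  fixes f :: "'a \<Rightarrow> nat"
  assumes "finite A" "a \<in> A" "b \<in> A" "a \<noteq> b"
  shows "f a + f b \<le> sum f A"
proof -
  have "sum f {a,b} \<le> sum f A" using assms by (intro sum_mono2) auto
  thus ?thesis using assms(4) by simp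
qed

lemma src_TIn: "tx_src xG T e = TIn v t \<Longrightarrow> e = HoldE v t"
  by (cases e) auto
lemma src_TOut: "tx_src xG T e = TOut v t \<Longrightarrow>
   (\<exists>j. e = LoopE j \<and> v = xG j \<and> t = T) \<or> e = MoveE v t \<or> (\<exists>e'. e = GInE v e' t)"
  by (cases e) auto
lemma src_GadA: "tx_src xG T e = GadA f t \<Longrightarrow> e = GMidE f t"
  by (cases e) auto
lemma src_GadB: "tx_src xG T e = GadB f t \<Longrightarrow> \<exists>w. e = GOutE f w t"
  by (cases e) auto
lemma tgt_TIn: "tx_tgt xI e = TIn v t \<Longrightarrow>
   (\<exists>s. t = Suc s \<and> (e = MoveE v s \<or> (\<exists>f. e = GOutE f v s)))"
  by (cases e) auto
lemma tgt_TOut: "tx_tgt xI e = TOut v t \<Longrightarrow> e = HoldE v t \<or> (\<exists>j. e = LoopE j \<and> v = xI j \<and> t = 0)"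
  by (cases e) auto
lemma tgt_GadA: "tx_tgt xI e = GadA f t \<Longrightarrow> \<exists>w. e = GInE w f t"
  by (cases e) auto
lemma tgt_GadB: "tx_tgt xI e = GadB f t \<Longrightarrow> e = GMidE f t"
  by (cases e) auto

lemma uedge_eq: "e \<in> uedges E \<Longrightarrow> u \<in> e \<Longrightarrow> v \<in> e \<Longrightarrow> u \<noteq> v \<Longrightarrow> e = {u,v}"
  by (auto simp: uedges_def)

lemma uedge_E: "sym E \<Longrightarrow> e \<in> uedges E \<Longrightarrow> u \<in> e \<Longrightarrow> v \<in> e \<Longrightarrow> u \<noteq> v \<Longrightarrow> (u,v) \<in> E"
  by (auto simp: uedges_def dest: symD)



context
  fixes V :: "'v set" and E n xI xG T x
  assumes inst: "mpp_instance V E n xI xG"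
  and feas: "ilp_feasible V E n xI xG T x"
  and loops: "\<forall>i<n. x i (LoopE i) = 1"
begin

lemma fin: "finite (tx_edges V E n T)"
  using inst finite_tx unfolding mpp_instance_def simple_connected_graph_def by blast

lemma EV: "E \<subseteq> V \<times> V" and symE: "sym E"
  using inst unfolding mpp_instance_def simple_connected_graph_def by blast+

lemma xz: "e \<notin> tx_edges V E n T \<Longrightarrow> x i e = 0"
  using feas unfolding ilp_feasible_def by blast

lemma xz2: "n \<le> i \<Longrightarrow> x i e = 0"
  using feas unfolding ilp_feasible_def by blast

lemma x01: "x i e \<le> 1"
proof (cases "i < n \<and> e \<in> tx_edges V E n T")
  case True thus ?thesis using feas unfolding ilp_feasible_def by blast
next
  case False thus ?thesis using xz xz2 by (metis le_eq_less_or_eq not_le zero_le)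
qed

lemma x1_mem: "x i e = 1 \<Longrightarrow> e \<in> tx_edges V E n T"
  using xz by fastforce

lemma x1_n: "x i e = 1 \<Longrightarrow> i < n"
  using xz2 by (metis not_le zero_neq_one)

lemma xne: "x i e \<noteq> 0 \<longleftrightarrow> x i e = 1"
  using x01[of i e] by linarith

lemma cons: "(\<Sum>e\<in>{e \<in> tx_edges V E n T. tx_tgt xI e = w}. x i e) =
        (\<Sum>e\<in>{e \<in> tx_edges V E n T. tx_src xG T e = w}. x i e)" if "i < n"
  using feas that unfolding ilp_feasible_def by blast

lemma cap: "e \<in> tx_edges V E n T \<Longrightarrow> (\<Sum>i<n. x i e) \<le> 1"
  using feas unfolding ilp_feasible_def by blast

lemma loopz: "i < n \<Longrightarrow> j < n \<Longrightarrow> i \<noteq> j \<Longrightarrow> x i (LoopE j) = 0"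
  using feas unfolding ilp_feasible_def by blast

lemma cap2: "i < n \<Longrightarrow> j < n \<Longrightarrow> i \<noteq> j \<Longrightarrow> x i e = 1 \<Longrightarrow> x j e = 1 \<Longrightarrow> False"
proof -
  assume a: "i < n" "j < n" "i \<noteq> j" "x i e = 1" "x j e = 1"
  have "x i e + x j e \<le> (\<Sum>k<n. x k e)" using a by (intro sum_two) auto
  moreover have "(\<Sum>k<n. x k e) \<le> 1" using cap x1_mem a by blast
  ultimately show False using a by simp
qed

definition act where "act i w \<longleftrightarrow> (\<exists>e\<in>tx_edges V E n T. tx_tgt xI e = w \<and> x i e = 1)"

lemma act_tgt: "x i e = 1 \<Longrightarrow> act i (tx_tgt xI e)"
  using x1_mem act_def by blast

lemma in_pos: "i < n \<Longrightarrow> act i w \<Longrightarrow> (\<Sum>e\<in>{e \<in> tx_edges V E n T. tx_tgt xI e = w}. x i e) \<noteq> 0"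
  unfolding act_def using fin by (subst sum_eq_0_iff) auto

lemma act_out: "i < n \<Longrightarrow> act i w \<Longrightarrow> \<exists>e. tx_src xG T e = w \<and> x i e = 1"
proof -
  assume a: "i < n" "act i w"
  hence "(\<Sum>e\<in>{e \<in> tx_edges V E n T. tx_src xG T e = w}. x i e) \<noteq> 0"
    using in_pos cons by simp
  then obtain e where "e \<in> {e \<in> tx_edges V E n T. tx_src xG T e = w}" "x i e \<noteq> 0"
    by (rule sum.not_neutral_contains_not_neutral)
  thus ?thesis using xne by blast
qed

lemma act_src: "x i e = 1 \<Longrightarrow> act i (tx_src xG T e)"
proof -
  assume a: "x i e = 1"
  have i: "i < n" using x1_n a .
  have "x i e \<le> (\<Sum>e\<in>{e' \<in> tx_edges V E n T. tx_src xG T e' = tx_src xG T e}. x i e)"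
    using fin x1_mem[OF a] by (intro member_le_sum) auto
  hence "(\<Sum>e\<in>{e' \<in> tx_edges V E n T. tx_tgt xI e' = tx_src xG T e}. x i e) \<noteq> 0"
    using cons[OF i] a by simp
  then obtain e' where "e' \<in> {e' \<in> tx_edges V E n T. tx_tgt xI e' = tx_src xG T e}" "x i e' \<noteq> 0"
    by (rule sum.not_neutral_contains_not_neutral)
  thus ?thesis using xne act_def by blast
qed

lemma act_in: "act i w \<Longrightarrow> \<exists>e. tx_tgt xI e = w \<and> x i e = 1"
  unfolding act_def by blast

lemma sum_le_single:
  fixes f :: "'a \<Rightarrow> nat"
  assumes "finite A" "\<forall>e\<in>A. f e \<noteq> 0 \<longrightarrow> e = a"
  shows "sum f A \<le> f a"
  using sum_one_nz[OF assms] by simp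

lemma in_le1: "i < n \<Longrightarrow> (\<Sum>e\<in>{e \<in> tx_edges V E n T. tx_tgt xI e = w}. x i e) \<le> 1"
proof (cases w)
  case (TIn v t)
  assume i: "i < n"
  have "(\<Sum>e\<in>{e \<in> tx_edges V E n T. tx_src xG T e = w}. x i e) \<le> x i (HoldE v t)"
    using fin TIn src_TIn by (intro sum_le_single) auto
  thus ?thesis using cons[OF i] x01[of i "HoldE v t"] by simp
next
  case (TOut v t)
  assume i: "i < n"
  have "(\<Sum>e\<in>{e \<in> tx_edges V E n T. tx_tgt xI e = w}. x i e) \<le> x i (if t = 0 then LoopE i else HoldE v t)"
  proof (rule sum_le_single)
    show "finite {e \<in> tx_edges V E n T. tx_tgt xI e = w}" using fin by simp
  next
    show "\<forall>e\<in>{e \<in> tx_edges V E n T. tx_tgt xI e = w}. x i e \<noteq> 0 \<longrightarrow> e = (if t = 0 then LoopE i else HoldE v t)"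
    proof (intro ballI impI)
    fix e assume e: "e \<in> {e \<in> tx_edges V E n T. tx_tgt xI e = w}" "x i e \<noteq> 0"
    from e have "e = HoldE v t \<or> (\<exists>j. e = LoopE j \<and> v = xI j \<and> t = 0)"
      using tgt_TOut[of xI e v t] TOut by simp
    thus "e = (if t = 0 then LoopE i else HoldE v t)"
    proof
      assume "e = HoldE v t" thus ?thesis using e by auto
    next
      assume "\<exists>j. e = LoopE j \<and> v = xI j \<and> t = 0"
      then obtain j where j: "e = LoopE j" "t = 0" by blast
      hence "j < n" using e by simp
      hence "j = i" using loopz[OF i \<open>j < n\<close>] e j by auto
      thus ?thesis using j by simp
    qed
    qed
  qed
  thus ?thesis using x01 order_trans by blast
next
  case (GadA f t)
  assume i: "i < n"
  have "(\<Sum>e\<in>{e \<in> tx_edges V E n T. tx_src xG T e = w}. x i e) \<le> x i (GMidE f t)"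
    using fin GadA src_GadA by (intro sum_le_single) auto
  thus ?thesis using cons[OF i] x01[of i "GMidE f t"] by simp
next
  case (GadB f t)
  assume i: "i < n"
  have "(\<Sum>e\<in>{e \<in> tx_edges V E n T. tx_tgt xI e = w}. x i e) \<le> x i (GMidE f t)"
    using fin GadB tgt_GadB by (intro sum_le_single) auto
  thus ?thesis using x01 order_trans by blast
qed

lemma uniq_in: "x i e1 = 1 \<Longrightarrow> x i e2 = 1 \<Longrightarrow> tx_tgt xI e1 = tx_tgt xI e2 \<Longrightarrow> e1 = e2"
proof (rule ccontr)
  assume a: "x i e1 = 1" "x i e2 = 1" "tx_tgt xI e1 = tx_tgt xI e2" "e1 \<noteq> e2"
  have i: "i < n" using x1_n a(1) .
  have "x i e1 + x i e2 \<le> (\<Sum>e\<in>{e \<in> tx_edges V E n T. tx_tgt xI e = tx_tgt xI e1}. x i e)"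
    using a fin x1_mem by (intro sum_two) auto
  moreover have "(\<Sum>e\<in>{e \<in> tx_edges V E n T. tx_tgt xI e = tx_tgt xI e1}. x i e) \<le> 1" using in_le1[OF i] .
  ultimately show False using a by linarith
qed

lemma uniq_out: "x i e1 = 1 \<Longrightarrow> x i e2 = 1 \<Longrightarrow> tx_src xG T e1 = tx_src xG T e2 \<Longrightarrow> e1 = e2"
proof (rule ccontr)
  assume a: "x i e1 = 1" "x i e2 = 1" "tx_src xG T e1 = tx_src xG T e2" "e1 \<noteq> e2"
  have i: "i < n" using x1_n a(1) .
  have "x i e1 + x i e2 \<le> (\<Sum>e\<in>{e \<in> tx_edges V E n T. tx_src xG T e = tx_src xG T e1}. x i e)"
    using a fin x1_mem by (intro sum_two) auto
  moreover have "(\<Sum>e\<in>{e \<in> tx_edges V E n T. tx_src xG T e = tx_src xG T e1}. x i e) \<le> 1" using in_le1[OF i] cons[OF i] by metis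
  ultimately show False using a by linarith
qed


definition pos where "pos i s v \<longleftrightarrow> act i (tnode_at v s)"
definition step where "step i u s v \<longleftrightarrow> (x i (MoveE u s) = 1 \<and> v = u) \<or> (\<exists>f. x i (GInE u f s) = 1 \<and> x i (GOutE f v s) = 1)"

lemma A1: "i < n \<Longrightarrow> pos i s u \<Longrightarrow> act i (TOut u s)"
proof (cases "s = 0")
  case True
  assume "pos i s u" thus ?thesis using True by (simp add: pos_def tnode_at_def)
next
  case False
  assume i: "i < n" and p: "pos i s u"
  hence "act i (TIn u s)" using False by (simp add: pos_def tnode_at_def)
  then obtain e where "tx_src xG T e = TIn u s" "x i e = 1" using act_out[OF i] by blast
  hence "x i (HoldE u s) = 1" by (metis src_TIn)
  from act_tgt[OF this] show ?thesis by simp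
qed

lemma A2: "act i (TOut u s) \<Longrightarrow> pos i s u"
proof (cases "s = 0")
  case True
  assume "act i (TOut u s)" thus ?thesis using True by (simp add: pos_def tnode_at_def)
next
  case False
  assume a: "act i (TOut u s)"
  then obtain e where e: "tx_tgt xI e = TOut u s" "x i e = 1" using act_in by blast
  hence "e = HoldE u s" using tgt_TOut[OF e(1)] False by blast
  hence "act i (TIn u s)" using act_src[OF e(2)] by simp
  thus ?thesis using False by (simp add: pos_def tnode_at_def)
qed

lemma fwd: "i < n \<Longrightarrow> pos i s u \<Longrightarrow> s < T \<Longrightarrow> \<exists>v. pos i (Suc s) v \<and> step i u s v"
proof -
  assume i: "i < n" and p: "pos i s u" and s: "s < T"
  obtain e where e: "tx_src xG T e = TOut u s" "x i e = 1" using act_out[OF i A1[OF i p]] by blast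
  from src_TOut[OF e(1)] show ?thesis
  proof (elim disjE exE conjE)
    fix j assume "e = LoopE j" "u = xG j" "s = T" thus ?thesis using s by simp
  next
    assume "e = MoveE u s"
    hence "act i (TIn u (Suc s))" using act_tgt[OF e(2)] by simp
    thus ?thesis using e(2) \<open>e = MoveE u s\<close> by (auto simp: pos_def tnode_at_def step_def)
  next
    fix f assume ef: "e = GInE u f s"
    hence "act i (GadA f s)" using act_tgt[OF e(2)] by simp
    then obtain e2 where e2: "tx_src xG T e2 = GadA f s" "x i e2 = 1" using act_out[OF i] by blast
    hence "x i (GMidE f s) = 1" by (metis src_GadA)
    hence "act i (GadB f s)" using act_tgt by fastforce
    then obtain e3 where e3: "tx_src xG T e3 = GadB f s" "x i e3 = 1" using act_out[OF i] by blast
    then obtain v where v: "e3 = GOutE f v s" using src_GadB by blast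
    hence "act i (TIn v (Suc s))" using act_tgt[OF e3(2)] by simp
    thus ?thesis using e(2) ef e3(2) v by (auto simp: pos_def tnode_at_def step_def)
  qed
qed

lemma bwd: "i < n \<Longrightarrow> pos i (Suc s) v \<Longrightarrow> \<exists>u. pos i s u \<and> step i u s v"
proof -
  assume i: "i < n" and p: "pos i (Suc s) v"
  hence "act i (TIn v (Suc s))" by (simp add: pos_def tnode_at_def)
  then obtain e where e: "tx_tgt xI e = TIn v (Suc s)" "x i e = 1" using act_in by blast
  from tgt_TIn[OF e(1)] have "e = MoveE v s \<or> (\<exists>f. e = GOutE f v s)" by auto
  thus ?thesis
  proof (elim disjE exE)
    assume "e = MoveE v s"
    hence "act i (TOut v s)" using act_src[OF e(2)] by simp
    thus ?thesis using A2 e(2) \<open>e = MoveE v s\<close> by (auto simp: step_def)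
  next
    fix f assume ef: "e = GOutE f v s"
    hence "act i (GadB f s)" using act_src[OF e(2)] by simp
    then obtain e2 where e2: "tx_tgt xI e2 = GadB f s" "x i e2 = 1" using act_in by blast
    hence "x i (GMidE f s) = 1" by (metis tgt_GadB)
    hence "act i (GadA f s)" using act_src by fastforce
    then obtain e3 where e3: "tx_tgt xI e3 = GadA f s" "x i e3 = 1" using act_in by blast
    then obtain u where u: "e3 = GInE u f s" using tgt_GadA by blast
    hence "act i (TOut u s)" using act_src[OF e3(2)] by simp
    thus ?thesis using A2 e(2) ef e3(2) u by (auto simp: step_def)
  qed
qed

lemma det: "step i u s v \<Longrightarrow> step i u s v' \<Longrightarrow> v = v'"
proof -
  assume a: "step i u s v" "step i u s v'"
  show ?thesis
  proof (cases "x i (MoveE u s) = 1")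
    case True
    have "\<not> (\<exists>f. x i (GInE u f s) = 1)"
      using uniq_out[OF True] by fastforce
    thus ?thesis using a True by (auto simp: step_def)
  next
    case False
    then obtain f f' where f: "x i (GInE u f s) = 1" "x i (GOutE f v s) = 1"
      and f': "x i (GInE u f' s) = 1" "x i (GOutE f' v' s) = 1" using a by (auto simp: step_def)
    have "f = f'" using uniq_out[OF f(1) f'(1)] by simp
    thus ?thesis using uniq_out[OF f(2) f'(2)] by simp
  qed
qed

lemma pos0: "i < n \<Longrightarrow> pos i 0 v \<longleftrightarrow> v = xI i"
proof
  assume i: "i < n" and p: "pos i 0 v"
  hence "act i (TOut v 0)" by (simp add: pos_def tnode_at_def)
  then obtain e where e: "tx_tgt xI e = TOut v 0" "x i e = 1" using act_in by blast
  from tgt_TOut[OF e(1)] show "v = xI i"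
  proof (elim disjE exE conjE)
    assume "e = HoldE v 0" thus ?thesis using x1_mem[OF e(2)] by simp
  next
    fix j assume j: "e = LoopE j" "v = xI j"
    have "j < n" using x1_mem[OF e(2)] j by simp
    hence "j = i" using loopz[OF i \<open>j < n\<close>] e(2) j by fastforce
    thus ?thesis using j by simp
  qed
next
  assume i: "i < n" and v: "v = xI i"
  have "act i (TOut (xI i) 0)" using act_tgt[of i "LoopE i"] loops i by simp
  thus "pos i 0 v" using v by (simp add: pos_def tnode_at_def)
qed

lemma pos_uniq: "i < n \<Longrightarrow> pos i s v \<Longrightarrow> pos i s v' \<Longrightarrow> v = v'"
proof (induction s arbitrary: v v')
  case 0 thus ?case using pos0[OF 0(1)] by simp
next
  case (Suc s)
  obtain u where u: "pos i s u" "step i u s v" using bwd Suc by blast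
  obtain u' where u': "pos i s u'" "step i u' s v'" using bwd Suc by blast
  have "u = u'" using Suc.IH[OF Suc.prems(1) u(1) u'(1)] .
  thus ?case using det[OF u(2)] u'(2) by simp
qed

lemma pos_ex: "i < n \<Longrightarrow> s \<le> T \<Longrightarrow> \<exists>v. pos i s v"
proof (induction s)
  case 0 thus ?case using pos0[OF 0(1)] by auto
next
  case (Suc s)
  then obtain v where "pos i s v" by (meson Suc_leD)
  thus ?case using fwd[OF Suc.prems(1)] Suc.prems(2) by (meson Suc_le_lessD)
qed

lemma step_E: "step i u s v \<Longrightarrow> u = v \<or> (u, v) \<in> E"
proof -
  assume "step i u s v"
  moreover
  { fix f assume f: "x i (GInE u f s) = 1" "x i (GOutE f v s) = 1"
    have "f \<in> uedges E" "u \<in> f" "v \<in> f" using x1_mem[OF f(1)] x1_mem[OF f(2)] by auto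
    hence "u = v \<or> (u, v) \<in> E" using uedge_E[OF symE, of f u v] by blast }
  ultimately show ?thesis unfolding step_def by blast
qed

lemma posV: "i < n \<Longrightarrow> pos i s v \<Longrightarrow> v \<in> V"
proof (cases s)
  case 0
  assume "i < n" "pos i s v"
  hence "v = xI i" using 0 pos0 by simp
  thus ?thesis using inst \<open>i < n\<close> unfolding mpp_instance_def by simp
next
  case (Suc s')
  assume i: "i < n" and p: "pos i s v"
  have "pos i (Suc s') v" using p Suc by simp
  then obtain u where u: "pos i s' u" "step i u s' v" using bwd[OF i] by blast
  show ?thesis
  proof (cases "x i (MoveE u s') = 1 \<and> v = u")
    case True thus ?thesis using x1_mem[of i "MoveE u s'"] by simp
  next
    case False
    then obtain f where "x i (GOutE f v s') = 1" using u(2) unfolding step_def by blast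
    hence "f \<in> uedges E" "v \<in> f" using x1_mem[of i "GOutE f v s'"] by simp_all
    thus ?thesis using uedges_sub[OF EV, of f] by blast
  qed
qed

lemma posT: "i < n \<Longrightarrow> pos i T (xG i)"
proof -
  assume i: "i < n"
  have "act i (TOut (xG i) T)" using act_src[of i "LoopE i"] loops i by simp
  thus ?thesis by (rule A2)
qed

lemma step_mid: "step i u s v \<Longrightarrow> u \<noteq> v \<Longrightarrow> x i (GMidE {u,v} s) = 1"
proof -
  assume st: "step i u s v" and uv: "u \<noteq> v"
  then obtain f where f: "x i (GInE u f s) = 1" "x i (GOutE f v s) = 1" unfolding step_def by blast
  have i: "i < n" using x1_n[OF f(1)] .
  have "f \<in> uedges E" "u \<in> f" "v \<in> f" using x1_mem[OF f(1)] x1_mem[OF f(2)] by auto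
  hence fe: "f = {u,v}" using uedge_eq[of f E u v] uv by blast
  have "act i (GadA f s)" using act_tgt[OF f(1)] by simp
  then obtain e2 where e2: "tx_src xG T e2 = GadA f s" "x i e2 = 1" using act_out[OF i] by blast
  thus ?thesis using fe by (metis src_GadA)
qed

lemma pos_step: "i < n \<Longrightarrow> pos i s u \<Longrightarrow> pos i (Suc s) v \<Longrightarrow> step i u s v"
proof -
  assume a: "i < n" "pos i s u" "pos i (Suc s) v"
  obtain u' where "pos i s u'" "step i u' s v" using bwd[OF a(1) a(3)] by blast
  thus ?thesis using pos_uniq[OF a(1) a(2)] by metis
qed

lemma pos_hold: "i < n \<Longrightarrow> pos i s v \<Longrightarrow> 1 \<le> s \<Longrightarrow> x i (HoldE v s) = 1"
proof -
  assume i: "i < n" and p: "pos i s v" and s: "1 \<le> s"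
  hence "act i (TIn v s)" by (simp add: pos_def tnode_at_def)
  then obtain e where "tx_src xG T e = TIn v s" "x i e = 1" using act_out[OF i] by blast
  thus ?thesis by (metis src_TIn)
qed


abbreviation "PP \<equiv> extract_paths V E n xI xG T x"

lemma ft_act: "flow_through V E n xI T x i w = act i w"
  unfolding flow_through_def act_def by simp

lemma P_pos: "i < n \<Longrightarrow> t \<le> T \<Longrightarrow> pos i t (PP i t)"
proof -
  assume i: "i < n" and t: "t \<le> T"
  obtain v where v: "pos i t v" using pos_ex[OF i t] by blast
  have vV: "v \<in> V" using posV[OF i v] .
  have "PP i t = (SOME v. v \<in> V \<and> pos i t v)" using t
    unfolding extract_paths_def ft_act pos_def by simp
  moreover have "pos i t (SOME v. v \<in> V \<and> pos i t v)"
    using someI[of "\<lambda>v. v \<in> V \<and> pos i t v" v] v vV by blast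
  ultimately show ?thesis by simp
qed

lemma P_ge: "i < n \<Longrightarrow> T \<le> t \<Longrightarrow> PP i t = xG i"
proof (cases "t = T")
  case True
  assume i: "i < n"
  show ?thesis using pos_uniq[OF i P_pos[OF i order_refl] posT[OF i]] True by simp
next
  case False
  assume "T \<le> t" thus ?thesis using False unfolding extract_paths_def by simp
qed

lemma P_0: "i < n \<Longrightarrow> PP i 0 = xI i"
  using P_pos[of i 0] pos0 by simp

lemma P_step: "i < n \<Longrightarrow> PP i k = PP i (Suc k) \<or> (PP i k, PP i (Suc k)) \<in> E"
proof (cases "k < T")
  case True
  assume i: "i < n"
  have "step i (PP i k) k (PP i (Suc k))"
    using pos_step[OF i P_pos[OF i] P_pos[OF i]] True by simp
  thus ?thesis using step_E by metis
next
  case False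
  assume i: "i < n"
  thus ?thesis using P_ge[OF i] False by simp
qed

lemma P_kmin: "i < n \<Longrightarrow> kmin (PP i) (xG i) \<le> T"
  unfolding kmin_def using P_ge by (intro Least_le) simp

lemma P_feas: "i < n \<Longrightarrow> feasible_path E (xI i) (xG i) (PP i)"
  unfolding feasible_path_def using P_0 P_ge P_step by blast

lemma noclash: "i < n \<Longrightarrow> j < n \<Longrightarrow> i \<noteq> j \<Longrightarrow> pos i k v \<Longrightarrow> pos j k v \<Longrightarrow> False"
proof (cases "k = 0")
  case True
  assume a: "i < n" "j < n" "i \<noteq> j" "pos i k v" "pos j k v"
  hence "xI i = xI j" using pos0 True by simp
  thus False using inst a unfolding mpp_instance_def inj_on_def by blast
next
  case False
  assume a: "i < n" "j < n" "i \<noteq> j" "pos i k v" "pos j k v"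
  have "x i (HoldE v k) = 1" "x j (HoldE v k) = 1" using pos_hold a False by auto
  thus False using cap2 a by blast
qed

lemma P_sol: "is_solution E n xI xG PP"
  unfolding is_solution_def
proof (intro conjI allI impI)
  fix i assume "i < n" thus "feasible_path E (xI i) (xG i) (PP i)" by (rule P_feas)
next
  fix i j assume i: "i < n" and j: "j < n" and ij: "i \<noteq> j"
  have injG: "xG i \<noteq> xG j" using inst i j ij unfolding mpp_instance_def inj_on_def by blast
  have same: "PP i k \<noteq> PP j k" for k
  proof (cases "k \<le> T")
    case True
    show ?thesis
    proof
      assume "PP i k = PP j k"
      thus False using noclash[OF i j ij P_pos[OF i True]] P_pos[OF j True] by simp
    qed
  next
    case False thus ?thesis using P_ge i j injG by simp
  qed
  show "\<not> collide (PP i) (PP j)"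
    unfolding collide_def
  proof
    assume "\<exists>k. PP i k = PP j k \<or> (PP i k, PP i (Suc k)) = (PP j (Suc k), PP j k)"
    then obtain k where k: "(PP i k, PP i (Suc k)) = (PP j (Suc k), PP j k)" using same by blast
    show False
    proof (cases "k < T")
      case False
      thus False using k P_ge i j injG by simp
    next
      case True
      define u where "u = PP i k"
      define v where "v = PP i (Suc k)"
      have uv: "u \<noteq> v" using k same[of k] unfolding u_def v_def by auto
      have si: "step i u k v" using pos_step[OF i P_pos[OF i] P_pos[OF i]] True unfolding u_def v_def by simp
      have sj: "step j v k u" using pos_step[OF j P_pos[OF j] P_pos[OF j]] True k unfolding u_def v_def by simp
      have "x i (GMidE {u,v} k) = 1" using step_mid[OF si uv] .
      moreover have "x j (GMidE {u,v} k) = 1" using step_mid[OF sj] uv by (simp add: insert_commute)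
      ultimately show False using cap2 i j ij by blast
    qed
  qed
qed

lemma P_makespan: "makespan n xG PP \<le> T"
  unfolding makespan_def
proof (subst Max_le_iff)
  show "finite (insert 0 {kmin (PP i) (xG i) |i. i < n})" by simp
  show "insert 0 {kmin (PP i) (xG i) |i. i < n} \<noteq> {}" by simp
  show "\<forall>a\<in>insert 0 {kmin (PP i) (xG i) |i. i < n}. a \<le> T" using P_kmin by auto
qed

end


lemma feas_goal: "feasible_path E s g p \<Longrightarrow> kmin p g \<le> k \<Longrightarrow> p k = g"
proof -
  assume f: "feasible_path E s g p" and k: "kmin p g \<le> k"
  from f obtain k0 where "\<forall>k'\<ge>k0. p k' = g" unfolding feasible_path_def by blast
  hence "\<forall>k'\<ge>kmin p g. p k' = g" unfolding kmin_def by (rule LeastI)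
  thus ?thesis using k by blast
qed

lemma feas_step: "feasible_path E s g p \<Longrightarrow> p k = p (Suc k) \<or> (p k, p (Suc k)) \<in> E"
proof (cases "k < kmin p g")
  case True
  assume "feasible_path E s g p" thus ?thesis using True unfolding feasible_path_def by blast
next
  case False
  assume f: "feasible_path E s g p"
  thus ?thesis using feas_goal[OF f] False by simp
qed

lemma feas_V: "feasible_path E s g p \<Longrightarrow> E \<subseteq> V \<times> V \<Longrightarrow> s \<in> V \<Longrightarrow> p k \<in> V"
proof (induction k)
  case 0 thus ?case unfolding feasible_path_def by simp
next
  case (Suc k)
  thus ?case using feas_step[OF Suc.prems(1), of k] by auto
qed

fun gx :: "(nat \<Rightarrow> nat \<Rightarrow> 'v) \<Rightarrow> nat \<Rightarrow> 'v tedge \<Rightarrow> nat" where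
  "gx Q i (LoopE j) = (if j = i then 1 else 0)"
| "gx Q i (HoldE v t) = (if Q i t = v then 1 else 0)"
| "gx Q i (MoveE v t) = (if Q i t = v \<and> Q i (Suc t) = v then 1 else 0)"
| "gx Q i (GInE w f t) = (if Q i t = w \<and> Q i (Suc t) \<noteq> w \<and> f = {w, Q i (Suc t)} then 1 else 0)"
| "gx Q i (GMidE f t) = (if Q i t \<noteq> Q i (Suc t) \<and> f = {Q i t, Q i (Suc t)} then 1 else 0)"
| "gx Q i (GOutE f w t) = (if Q i t \<noteq> w \<and> Q i (Suc t) = w \<and> f = {Q i t, w} then 1 else 0)"

lemma sum_le_single':
  fixes f :: "'a \<Rightarrow> nat"
  assumes "finite A" "\<forall>e\<in>A. f e \<noteq> 0 \<longrightarrow> e = a"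
  shows "sum f A \<le> f a"
  using sum_one_nz[OF assms] by simp

context
  fixes V :: "'v set" and E n xI xG Q T
  assumes inst: "mpp_instance V E n xI xG"
  and sol: "is_solution E n xI xG Q"
  and mk: "makespan n xG Q \<le> T"
begin

lemma finC: "finite (tx_edges V E n T)"
  using inst finite_tx unfolding mpp_instance_def simple_connected_graph_def by blast

lemma EVC: "E \<subseteq> V \<times> V" and symEC: "sym E"
  using inst unfolding mpp_instance_def simple_connected_graph_def by blast+

lemma Qf: "i < n \<Longrightarrow> feasible_path E (xI i) (xG i) (Q i)"
  using sol unfolding is_solution_def by blast

lemma kmin_mk: "i < n \<Longrightarrow> kmin (Q i) (xG i) \<le> T"
proof -
  assume i: "i < n"
  have "kmin (Q i) (xG i) \<le> makespan n xG Q"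
    unfolding makespan_def using i by (intro Max_ge) auto
  thus ?thesis using mk by simp
qed

lemma QT: "i < n \<Longrightarrow> T \<le> k \<Longrightarrow> Q i k = xG i"
proof -
  assume i: "i < n" and k: "T \<le> k"
  show ?thesis using feas_goal[OF Qf[OF i]] kmin_mk[OF i] k by simp
qed

lemma Q0: "i < n \<Longrightarrow> Q i 0 = xI i"
  using Qf unfolding feasible_path_def by blast

lemma QV: "i < n \<Longrightarrow> Q i k \<in> V"
proof -
  assume i: "i < n"
  have "xI i \<in> V" using inst i unfolding mpp_instance_def by simp
  thus ?thesis using feas_V[OF Qf[OF i] EVC] by simp
qed

lemma mvE: "i < n \<Longrightarrow> Q i k \<noteq> Q i (Suc k) \<Longrightarrow> (Q i k, Q i (Suc k)) \<in> E"
  using feas_step[OF Qf, of i k] by simp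

lemma mvT: "i < n \<Longrightarrow> Q i k \<noteq> Q i (Suc k) \<Longrightarrow> k < T"
proof (rule ccontr)
  assume i: "i < n" and m: "Q i k \<noteq> Q i (Suc k)" and "\<not> k < T"
  hence "Q i k = xG i" "Q i (Suc k) = xG i" using QT by simp_all
  thus False using m by simp
qed

lemma mvU: "i < n \<Longrightarrow> Q i k \<noteq> Q i (Suc k) \<Longrightarrow> {Q i k, Q i (Suc k)} \<in> uedges E"
  using mvE[of i k] unfolding uedges_def by blast

definition xx where "xx i e = (if i < n \<and> e \<in> tx_edges V E n T then gx Q i e else 0)"

lemma sumA: "tx_tgt xI a = w \<Longrightarrow> (\<forall>e\<in>tx_edges V E n T. tx_tgt xI e = w \<longrightarrow> xx i e \<noteq> 0 \<longrightarrow> e = a) \<Longrightarrow>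
   (\<Sum>e\<in>{e \<in> tx_edges V E n T. tx_tgt xI e = w}. xx i e) = xx i a"
proof -
  assume a: "tx_tgt xI a = w" and b: "\<forall>e\<in>tx_edges V E n T. tx_tgt xI e = w \<longrightarrow> xx i e \<noteq> 0 \<longrightarrow> e = a"
  have "(\<Sum>e\<in>{e \<in> tx_edges V E n T. tx_tgt xI e = w}. xx i e) = (if a \<in> {e \<in> tx_edges V E n T. tx_tgt xI e = w} then xx i a else 0)"
    using finC b by (intro sum_one_nz) simp_all
  thus ?thesis using a by (simp add: xx_def)
qed

lemma sumZ: "(\<forall>e\<in>tx_edges V E n T. tx_tgt xI e = w \<longrightarrow> xx i e = 0) \<Longrightarrow>
   (\<Sum>e\<in>{e \<in> tx_edges V E n T. tx_tgt xI e = w}. xx i e) = 0"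
  by (rule sum.neutral) simp

lemma sumA': "tx_src xG T a = w \<Longrightarrow> (\<forall>e\<in>tx_edges V E n T. tx_src xG T e = w \<longrightarrow> xx i e \<noteq> 0 \<longrightarrow> e = a) \<Longrightarrow>
   (\<Sum>e\<in>{e \<in> tx_edges V E n T. tx_src xG T e = w}. xx i e) = xx i a"
proof -
  assume a: "tx_src xG T a = w" and b: "\<forall>e\<in>tx_edges V E n T. tx_src xG T e = w \<longrightarrow> xx i e \<noteq> 0 \<longrightarrow> e = a"
  have "(\<Sum>e\<in>{e \<in> tx_edges V E n T. tx_src xG T e = w}. xx i e) = (if a \<in> {e \<in> tx_edges V E n T. tx_src xG T e = w} then xx i a else 0)"
    using finC b by (intro sum_one_nz) simp_all
  thus ?thesis using a by (simp add: xx_def)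
qed

lemma sumZ': "(\<forall>e\<in>tx_edges V E n T. tx_src xG T e = w \<longrightarrow> xx i e = 0) \<Longrightarrow>
   (\<Sum>e\<in>{e \<in> tx_edges V E n T. tx_src xG T e = w}. xx i e) = 0"
  by (rule sum.neutral) simp


definition occ where "occ i w = (case w of
     TIn v t \<Rightarrow> if 1 \<le> t \<and> t \<le> T \<and> Q i t = v then 1 else 0
   | TOut v t \<Rightarrow> if t \<le> T \<and> Q i t = v then 1 else (0::nat)
   | GadA f t \<Rightarrow> if t < T \<and> Q i t \<noteq> Q i (Suc t) \<and> f = {Q i t, Q i (Suc t)} then 1 else 0
   | GadB f t \<Rightarrow> if t < T \<and> Q i t \<noteq> Q i (Suc t) \<and> f = {Q i t, Q i (Suc t)} then 1 else 0)"

lemma In_TIn: "i < n \<Longrightarrow> (\<Sum>e\<in>{e \<in> tx_edges V E n T. tx_tgt xI e = TIn v t}. xx i e) = occ i (TIn v t)"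
proof (cases t)
  case 0
  have "(\<Sum>e\<in>{e \<in> tx_edges V E n T. tx_tgt xI e = TIn v t}. xx i e) = 0"
  proof (rule sumZ, intro ballI impI)
    fix e assume "e \<in> tx_edges V E n T" "tx_tgt xI e = TIn v t"
    thus "xx i e = 0" using tgt_TIn[of xI e v t] 0 by simp
  qed
  thus ?thesis using 0 by (simp add: occ_def)
next
  case (Suc s)
  assume i: "i < n"
  define a where "a = (if Q i s = v then MoveE v s else GOutE {Q i s, v} v s)"
  have "(\<Sum>e\<in>{e \<in> tx_edges V E n T. tx_tgt xI e = TIn v t}. xx i e) = xx i a"
  proof (rule sumA)
    show "tx_tgt xI a = TIn v t" unfolding a_def Suc by simp
    show "\<forall>e\<in>tx_edges V E n T. tx_tgt xI e = TIn v t \<longrightarrow> xx i e \<noteq> 0 \<longrightarrow> e = a"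
    proof (intro ballI impI)
      fix e assume e: "e \<in> tx_edges V E n T" "tx_tgt xI e = TIn v t" "xx i e \<noteq> 0"
      hence "e = MoveE v s \<or> (\<exists>f. e = GOutE f v s)" using tgt_TIn[OF e(2)] Suc by auto
      thus "e = a"
      proof (elim disjE exE)
        assume "e = MoveE v s" thus ?thesis using e(3) unfolding a_def xx_def by (auto split: if_splits)
      next
        fix f assume "e = GOutE f v s" thus ?thesis using e(3) unfolding a_def xx_def by (auto split: if_splits)
      qed
    qed
  qed
  moreover have "xx i a = occ i (TIn v t)"
  proof (cases "Q i s = v")
    case True
    thus ?thesis unfolding a_def xx_def occ_def Suc using QV[OF i, of s] i by auto
  next
    case False
    show ?thesis
    proof (cases "Q i (Suc s) = v")
      case True
      have "{Q i s, v} \<in> uedges E" "s < T" using mvU[OF i, of s] mvT[OF i, of s] False True by auto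
      thus ?thesis unfolding a_def xx_def occ_def Suc using False True i by auto
    next
      case F2: False
      thus ?thesis unfolding a_def xx_def occ_def Suc using False i by auto
    qed
  qed
  ultimately show ?thesis by simp
qed

lemma Out_TIn: "i < n \<Longrightarrow> (\<Sum>e\<in>{e \<in> tx_edges V E n T. tx_src xG T e = TIn v t}. xx i e) = occ i (TIn v t)"
proof -
  assume i: "i < n"
  have "(\<Sum>e\<in>{e \<in> tx_edges V E n T. tx_src xG T e = TIn v t}. xx i e) = xx i (HoldE v t)"
  proof (rule sumA')
    show "tx_src xG T (HoldE v t) = TIn v t" by simp
    show "\<forall>e\<in>tx_edges V E n T. tx_src xG T e = TIn v t \<longrightarrow> xx i e \<noteq> 0 \<longrightarrow> e = HoldE v t"
      using src_TIn[of xG T _ v t] by auto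
  qed
  moreover have "xx i (HoldE v t) = occ i (TIn v t)"
    unfolding xx_def occ_def using i QV[OF i, of t] by auto
  ultimately show ?thesis by simp
qed

lemma In_TOut: "i < n \<Longrightarrow> (\<Sum>e\<in>{e \<in> tx_edges V E n T. tx_tgt xI e = TOut v t}. xx i e) = occ i (TOut v t)"
proof -
  assume i: "i < n"
  show ?thesis
  proof (cases t)
    case (Suc s)
    have "(\<Sum>e\<in>{e \<in> tx_edges V E n T. tx_tgt xI e = TOut v t}. xx i e) = xx i (HoldE v t)"
    proof (rule sumA)
      show "tx_tgt xI (HoldE v t) = TOut v t" by simp
      show "\<forall>e\<in>tx_edges V E n T. tx_tgt xI e = TOut v t \<longrightarrow> xx i e \<noteq> 0 \<longrightarrow> e = HoldE v t"
        using tgt_TOut[of xI _ v t] Suc by auto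
    qed
    moreover have "xx i (HoldE v t) = occ i (TOut v t)"
      unfolding xx_def occ_def using i QV[OF i, of t] Suc by auto
    ultimately show ?thesis by simp
  next
    case 0
    show ?thesis
    proof (cases "v = xI i")
      case True
      have "(\<Sum>e\<in>{e \<in> tx_edges V E n T. tx_tgt xI e = TOut v t}. xx i e) = xx i (LoopE i)"
      proof (rule sumA)
        show "tx_tgt xI (LoopE i) = TOut v t" using True 0 by simp
        show "\<forall>e\<in>tx_edges V E n T. tx_tgt xI e = TOut v t \<longrightarrow> xx i e \<noteq> 0 \<longrightarrow> e = LoopE i"
        proof (intro ballI impI)
          fix e assume e: "e \<in> tx_edges V E n T" "tx_tgt xI e = TOut v t" "xx i e \<noteq> 0"
          from tgt_TOut[OF e(2)] show "e = LoopE i"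
          proof (elim disjE exE conjE)
            assume "e = HoldE v t" thus ?thesis using e(1) 0 by simp
          next
            fix j assume "e = LoopE j" thus ?thesis using e(3) unfolding xx_def by (auto split: if_splits)
          qed
        qed
      qed
      thus ?thesis using i True 0 Q0[OF i] by (simp add: xx_def occ_def)
    next
      case False
      have "(\<Sum>e\<in>{e \<in> tx_edges V E n T. tx_tgt xI e = TOut v t}. xx i e) = 0"
      proof (rule sumZ, intro ballI impI)
        fix e assume e: "e \<in> tx_edges V E n T" "tx_tgt xI e = TOut v t"
        from tgt_TOut[OF e(2)] show "xx i e = 0"
        proof (elim disjE exE conjE)
          assume "e = HoldE v t" thus ?thesis using e(1) 0 by simp
        next
          fix j assume "e = LoopE j" "v = xI j" thus ?thesis using False unfolding xx_def by auto
        qed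
      qed
      thus ?thesis using i False 0 Q0[OF i] by (simp add: occ_def)
    qed
  qed
qed


lemma Out_TOut: "i < n \<Longrightarrow> (\<Sum>e\<in>{e \<in> tx_edges V E n T. tx_src xG T e = TOut v t}. xx i e) = occ i (TOut v t)"
proof -
  assume i: "i < n"
  consider (lt) "t < T" | (eq) "t = T" | (gt) "T < t" by linarith
  thus ?thesis
  proof cases
    case lt
    define a where "a = (if Q i (Suc t) = v then MoveE v t else GInE v {v, Q i (Suc t)} t)"
    have "(\<Sum>e\<in>{e \<in> tx_edges V E n T. tx_src xG T e = TOut v t}. xx i e) = xx i a"
    proof (rule sumA')
      show "tx_src xG T a = TOut v t" unfolding a_def by simp
      show "\<forall>e\<in>tx_edges V E n T. tx_src xG T e = TOut v t \<longrightarrow> xx i e \<noteq> 0 \<longrightarrow> e = a"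
      proof (intro ballI impI)
        fix e assume e: "e \<in> tx_edges V E n T" "tx_src xG T e = TOut v t" "xx i e \<noteq> 0"
        from src_TOut[OF e(2)] show "e = a"
        proof (elim disjE exE conjE)
          fix j assume "e = LoopE j" "v = xG j" "t = T" thus ?thesis using lt by simp
        next
          assume "e = MoveE v t" thus ?thesis using e(3) unfolding a_def xx_def by (auto split: if_splits)
        next
          fix f assume "e = GInE v f t" thus ?thesis using e(3) unfolding a_def xx_def by (auto split: if_splits)
        qed
      qed
    qed
    moreover have "xx i a = occ i (TOut v t)"
    proof (cases "Q i (Suc t) = v")
      case True
      thus ?thesis unfolding a_def xx_def occ_def using QV[OF i, of "Suc t"] i lt by auto
    next
      case False
      show ?thesis
      proof (cases "Q i t = v")
        case True
        have "{v, Q i (Suc t)} \<in> uedges E" using mvU[OF i, of t] False True by auto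
        thus ?thesis unfolding a_def xx_def occ_def using False True i lt by auto
      next
        case F2: False
        thus ?thesis unfolding a_def xx_def occ_def using False i lt by auto
      qed
    qed
    ultimately show ?thesis by simp
  next
    case eq
    show ?thesis
    proof (cases "v = xG i")
      case True
      have "(\<Sum>e\<in>{e \<in> tx_edges V E n T. tx_src xG T e = TOut v t}. xx i e) = xx i (LoopE i)"
      proof (rule sumA')
        show "tx_src xG T (LoopE i) = TOut v t" using True eq by simp
        show "\<forall>e\<in>tx_edges V E n T. tx_src xG T e = TOut v t \<longrightarrow> xx i e \<noteq> 0 \<longrightarrow> e = LoopE i"
        proof (intro ballI impI)
          fix e assume e: "e \<in> tx_edges V E n T" "tx_src xG T e = TOut v t" "xx i e \<noteq> 0"
          from src_TOut[OF e(2)] show "e = LoopE i"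
          proof (elim disjE exE conjE)
            fix j assume "e = LoopE j" thus ?thesis using e(3) unfolding xx_def by (auto split: if_splits)
          next
            assume "e = MoveE v t" thus ?thesis using e(1) eq by simp
          next
            fix f assume "e = GInE v f t" thus ?thesis using e(1) eq by simp
          qed
        qed
      qed
      thus ?thesis using i True eq QT[OF i, of T] by (simp add: xx_def occ_def)
    next
      case False
      have "(\<Sum>e\<in>{e \<in> tx_edges V E n T. tx_src xG T e = TOut v t}. xx i e) = 0"
      proof (rule sumZ', intro ballI impI)
        fix e assume e: "e \<in> tx_edges V E n T" "tx_src xG T e = TOut v t"
        from src_TOut[OF e(2)] show "xx i e = 0"
        proof (elim disjE exE conjE)
          fix j assume "e = LoopE j" "v = xG j" thus ?thesis using False unfolding xx_def by auto
        next
          assume "e = MoveE v t" thus ?thesis using e(1) eq by simp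
        next
          fix f assume "e = GInE v f t" thus ?thesis using e(1) eq by simp
        qed
      qed
      thus ?thesis using i False eq QT[OF i, of T] by (simp add: occ_def)
    qed
  next
    case gt
    have "(\<Sum>e\<in>{e \<in> tx_edges V E n T. tx_src xG T e = TOut v t}. xx i e) = 0"
    proof (rule sumZ', intro ballI impI)
      fix e assume e: "e \<in> tx_edges V E n T" "tx_src xG T e = TOut v t"
      from src_TOut[OF e(2)] show "xx i e = 0"
      proof (elim disjE exE conjE)
        fix j assume "e = LoopE j" "t = T" thus ?thesis using gt by simp
      next
        assume "e = MoveE v t" thus ?thesis using e(1) gt by simp
      next
        fix f assume "e = GInE v f t" thus ?thesis using e(1) gt by simp
      qed
    qed
    thus ?thesis using gt by (simp add: occ_def)
  qed
qed

lemma mid_val: "i < n \<Longrightarrow> (if f \<in> uedges E \<and> t < T then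
      (if Q i t \<noteq> Q i (Suc t) \<and> f = {Q i t, Q i (Suc t)} then 1 else 0) else (0::nat))
   = (if t < T \<and> Q i t \<noteq> Q i (Suc t) \<and> f = {Q i t, Q i (Suc t)} then 1 else 0)"
  using mvU[of i t] by auto

lemma In_GadA: "i < n \<Longrightarrow> (\<Sum>e\<in>{e \<in> tx_edges V E n T. tx_tgt xI e = GadA f t}. xx i e) = occ i (GadA f t)"
proof -
  assume i: "i < n"
  have "(\<Sum>e\<in>{e \<in> tx_edges V E n T. tx_tgt xI e = GadA f t}. xx i e) = xx i (GInE (Q i t) f t)"
  proof (rule sumA)
    show "tx_tgt xI (GInE (Q i t) f t) = GadA f t" by simp
    show "\<forall>e\<in>tx_edges V E n T. tx_tgt xI e = GadA f t \<longrightarrow> xx i e \<noteq> 0 \<longrightarrow> e = GInE (Q i t) f t"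
    proof (intro ballI impI)
      fix e assume e: "e \<in> tx_edges V E n T" "tx_tgt xI e = GadA f t" "xx i e \<noteq> 0"
      obtain w where "e = GInE w f t" using tgt_GadA[OF e(2)] by blast
      thus "e = GInE (Q i t) f t" using e(3) unfolding xx_def by (auto split: if_splits)
    qed
  qed
  moreover have "xx i (GInE (Q i t) f t) = occ i (GadA f t)"
    unfolding xx_def occ_def using i mvU[of i t] by auto
  ultimately show ?thesis by simp
qed

lemma Out_GadA: "i < n \<Longrightarrow> (\<Sum>e\<in>{e \<in> tx_edges V E n T. tx_src xG T e = GadA f t}. xx i e) = occ i (GadA f t)"
proof -
  assume i: "i < n"
  have "(\<Sum>e\<in>{e \<in> tx_edges V E n T. tx_src xG T e = GadA f t}. xx i e) = xx i (GMidE f t)"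
  proof (rule sumA')
    show "tx_src xG T (GMidE f t) = GadA f t" by simp
    show "\<forall>e\<in>tx_edges V E n T. tx_src xG T e = GadA f t \<longrightarrow> xx i e \<noteq> 0 \<longrightarrow> e = GMidE f t"
      using src_GadA[of xG T _ f t] by auto
  qed
  moreover have "xx i (GMidE f t) = occ i (GadA f t)"
    unfolding xx_def occ_def using i mvU[of i t] by auto
  ultimately show ?thesis by simp
qed

lemma In_GadB: "i < n \<Longrightarrow> (\<Sum>e\<in>{e \<in> tx_edges V E n T. tx_tgt xI e = GadB f t}. xx i e) = occ i (GadB f t)"
proof -
  assume i: "i < n"
  have "(\<Sum>e\<in>{e \<in> tx_edges V E n T. tx_tgt xI e = GadB f t}. xx i e) = xx i (GMidE f t)"
  proof (rule sumA)
    show "tx_tgt xI (GMidE f t) = GadB f t" by simp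
    show "\<forall>e\<in>tx_edges V E n T. tx_tgt xI e = GadB f t \<longrightarrow> xx i e \<noteq> 0 \<longrightarrow> e = GMidE f t"
      using tgt_GadB[of xI _ f t] by auto
  qed
  moreover have "xx i (GMidE f t) = occ i (GadB f t)"
    unfolding xx_def occ_def using i mvU[of i t] by auto
  ultimately show ?thesis by simp
qed

lemma Out_GadB: "i < n \<Longrightarrow> (\<Sum>e\<in>{e \<in> tx_edges V E n T. tx_src xG T e = GadB f t}. xx i e) = occ i (GadB f t)"
proof -
  assume i: "i < n"
  have "(\<Sum>e\<in>{e \<in> tx_edges V E n T. tx_src xG T e = GadB f t}. xx i e) = xx i (GOutE f (Q i (Suc t)) t)"
  proof (rule sumA')
    show "tx_src xG T (GOutE f (Q i (Suc t)) t) = GadB f t" by simp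
    show "\<forall>e\<in>tx_edges V E n T. tx_src xG T e = GadB f t \<longrightarrow> xx i e \<noteq> 0 \<longrightarrow> e = GOutE f (Q i (Suc t)) t"
    proof (intro ballI impI)
      fix e assume e: "e \<in> tx_edges V E n T" "tx_src xG T e = GadB f t" "xx i e \<noteq> 0"
      obtain w where "e = GOutE f w t" using src_GadB[OF e(2)] by blast
      thus "e = GOutE f (Q i (Suc t)) t" using e(3) unfolding xx_def by (auto split: if_splits)
    qed
  qed
  moreover have "xx i (GOutE f (Q i (Suc t)) t) = occ i (GadB f t)"
    unfolding xx_def occ_def using i mvU[of i t] by auto
  ultimately show ?thesis by simp
qed

lemma xx_cons: "i < n \<Longrightarrow> (\<Sum>e\<in>{e \<in> tx_edges V E n T. tx_tgt xI e = w}. xx i e) =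
        (\<Sum>e\<in>{e \<in> tx_edges V E n T. tx_src xG T e = w}. xx i e)"
  by (cases w) (simp_all only: In_TIn Out_TIn In_TOut Out_TOut In_GadA Out_GadA In_GadB Out_GadB)


lemma gx_le1: "gx Q i e \<le> 1"
  by (cases e) auto

lemma gx_pair: "i < n \<Longrightarrow> j < n \<Longrightarrow> i \<noteq> j \<Longrightarrow> gx Q i e \<noteq> 0 \<Longrightarrow> gx Q j e \<noteq> 0 \<Longrightarrow> False"
proof -
  assume i: "i < n" and j: "j < n" and ij: "i \<noteq> j" and gi: "gx Q i e \<noteq> 0" and gj: "gx Q j e \<noteq> 0"
  have nc: "\<not> collide (Q i) (Q j)" using sol i j ij unfolding is_solution_def by blast
  have same: "Q i k \<noteq> Q j k" for k using nc unfolding collide_def by blast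
  have swap: "\<not> (Q i k = Q j (Suc k) \<and> Q i (Suc k) = Q j k)" for k using nc unfolding collide_def by blast
  show False
  proof (cases e)
    case (LoopE k) thus False using gi gj ij by (auto split: if_splits)
  next
    case (HoldE v t) thus False using gi gj same[of t] by (auto split: if_splits)
  next
    case (MoveE v t) thus False using gi gj same[of t] by (auto split: if_splits)
  next
    case (GInE w f t) thus False using gi gj same[of t] by (auto split: if_splits)
  next
    case (GMidE f t)
    hence "{Q i t, Q i (Suc t)} = {Q j t, Q j (Suc t)}" using gi gj by (auto split: if_splits)
    thus False using same[of t] swap[of t] by (auto simp: doubleton_eq_iff)
  next
    case (GOutE f w t) thus False using gi gj same[of "Suc t"] by (auto split: if_splits)
  qed
qed

lemma xx_feas: "ilp_feasible V E n xI xG T xx"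
  unfolding ilp_feasible_def
proof (intro conjI allI impI ballI)
  fix i e assume "n \<le> i \<or> e \<notin> tx_edges V E n T" thus "xx i e = 0" unfolding xx_def by auto
next
  fix i e assume "i < n" "e \<in> tx_edges V E n T" thus "xx i e \<le> 1" unfolding xx_def using gx_le1 by simp
next
  fix e assume e: "e \<in> tx_edges V E n T"
  show "(\<Sum>i<n. xx i e) \<le> 1"
  proof (cases "\<exists>i0<n. xx i0 e \<noteq> 0")
    case True
    then obtain i0 where i0: "i0 < n" "xx i0 e \<noteq> 0" by blast
    have "(\<Sum>i<n. xx i e) \<le> xx i0 e"
    proof (rule sum_le_single')
      show "finite {..<n}" by simp
      show "\<forall>i\<in>{..<n}. xx i e \<noteq> 0 \<longrightarrow> i = i0"
        using i0 gx_pair unfolding xx_def by (metis lessThan_iff)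
    qed
    thus ?thesis using gx_le1[of i0 e] unfolding xx_def by (simp split: if_splits)
  next
    case False thus ?thesis by simp
  qed
next
  fix i j assume "i < n" "j < n" "i \<noteq> j" thus "xx i (LoopE j) = 0" unfolding xx_def by simp
next
  fix w i assume "i < n" thus "(\<Sum>e\<in>{e \<in> tx_edges V E n T. tx_tgt xI e = w}. xx i e) =
        (\<Sum>e\<in>{e \<in> tx_edges V E n T. tx_src xG T e = w}. xx i e)" by (rule xx_cons)
qed

lemma xx_obj: "ilp_obj n xx = n"
  unfolding ilp_obj_def xx_def by simp

end



lemma obj_le: "ilp_feasible V E n xI xG T x \<Longrightarrow> ilp_obj n x \<le> n"
proof -
  assume f: "ilp_feasible V E n xI xG T x"
  have "\<forall>i<n. x i (LoopE i) \<le> 1"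
  proof (intro allI impI)
    fix i assume "i < n"
    hence "LoopE i \<in> tx_edges V E n T" by simp
    thus "x i (LoopE i) \<le> 1" using f \<open>i < n\<close> unfolding ilp_feasible_def by blast
  qed
  hence "(\<Sum>i<n. x i (LoopE i)) \<le> (\<Sum>i<n. (1::nat))" by (intro sum_mono) simp
  thus ?thesis unfolding ilp_obj_def by simp
qed

lemma zero_feas: "ilp_feasible V E n xI xG T (\<lambda>_ _. 0)"
  unfolding ilp_feasible_def by simp

lemma in_objS: "ilp_feasible V E n xI xG T x \<Longrightarrow> ilp_obj n x \<in> {ilp_obj n x | x. ilp_feasible V E n xI xG T x}"
  by blast

lemma opt_n_iff: "ilp_opt V E n xI xG T = n \<longleftrightarrow> (\<exists>x. ilp_feasible V E n xI xG T x \<and> ilp_obj n x = n)"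
proof -
  let ?S = "{ilp_obj n x | x. ilp_feasible V E n xI xG T x}"
  have sub: "?S \<subseteq> {..n}"
  proof
    fix y assume "y \<in> ?S"
    then obtain x where "y = ilp_obj n x" "ilp_feasible V E n xI xG T x" by blast
    thus "y \<in> {..n}" using obj_le[of V E n xI xG T x] by simp
  qed
  hence fin: "finite ?S" using finite_subset[OF sub] by simp
  have "\<exists>x. ilp_feasible V E n xI xG T x" by (metis zero_feas)
  then obtain x0 where "ilp_feasible V E n xI xG T x0" by blast
  hence "ilp_obj n x0 \<in> ?S" by (rule in_objS)
  hence ne: "?S \<noteq> {}" by (metis empty_iff)
  show ?thesis
  proof
    assume "ilp_opt V E n xI xG T = n"
    hence "n \<in> ?S" using Max_in[OF fin ne] unfolding ilp_opt_def by simp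
    then obtain x where "n = ilp_obj n x" "ilp_feasible V E n xI xG T x" by blast
    thus "\<exists>x. ilp_feasible V E n xI xG T x \<and> ilp_obj n x = n" by auto
  next
    assume "\<exists>x. ilp_feasible V E n xI xG T x \<and> ilp_obj n x = n"
    then obtain x where x1: "ilp_feasible V E n xI xG T x" and x2: "ilp_obj n x = n" by blast
    have "ilp_obj n x \<in> ?S" using x1 by (rule in_objS)
    hence "n \<in> ?S" using x2 by simp
    moreover have "\<And>y. y \<in> ?S \<Longrightarrow> y \<le> n" using sub by auto
    ultimately have "Max ?S = n" using fin by (intro Max_eqI) simp_all
    thus "ilp_opt V E n xI xG T = n" unfolding ilp_opt_def .
  qed
qed

lemma obj_loops: "ilp_feasible V E n xI xG T x \<Longrightarrow> ilp_obj n x = n \<Longrightarrow> \<forall>i<n. x i (LoopE i) = 1"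
proof (intro allI impI, rule ccontr)
  fix i0 assume f: "ilp_feasible V E n xI xG T x" and o: "ilp_obj n x = n" and i0: "i0 < n"
    and ne: "x i0 (LoopE i0) \<noteq> 1"
  have le: "\<forall>i<n. x i (LoopE i) \<le> 1"
  proof (intro allI impI)
    fix i assume "i < n"
    hence "LoopE i \<in> tx_edges V E n T" by simp
    thus "x i (LoopE i) \<le> 1" using f \<open>i < n\<close> unfolding ilp_feasible_def by blast
  qed
  hence z: "x i0 (LoopE i0) = 0" using ne i0 by (metis le_neq_implies_less less_one)
  have "(\<Sum>i<n. x i (LoopE i)) = x i0 (LoopE i0) + (\<Sum>i\<in>{..<n} - {i0}. x i (LoopE i))"
    using i0 by (simp add: sum.remove)
  also have "\<dots> \<le> 0 + (\<Sum>i\<in>{..<n} - {i0}. (1::nat))" using z le by (intro add_mono sum_mono) auto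
  also have "\<dots> = n - 1" using i0 by simp
  finally show False using o i0 unfolding ilp_obj_def by simp
qed

lemma extract_sol: "mpp_instance V E n xI xG \<Longrightarrow> ilp_feasible V E n xI xG T x \<Longrightarrow> ilp_obj n x = n \<Longrightarrow>
  is_solution E n xI xG (extract_paths V E n xI xG T x) \<and> makespan n xG (extract_paths V E n xI xG T x) \<le> T"
proof -
  assume a: "mpp_instance V E n xI xG" "ilp_feasible V E n xI xG T x" "ilp_obj n x = n"
  have l: "\<forall>i<n. x i (LoopE i) = 1" using obj_loops[OF a(2,3)] .
  show ?thesis using P_sol[OF a(1,2) l] P_makespan[OF a(1,2) l] by simp
qed

lemma sol_opt: "mpp_instance V E n xI xG \<Longrightarrow> is_solution E n xI xG Q \<Longrightarrow> makespan n xG Q \<le> T \<Longrightarrow>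
  ilp_opt V E n xI xG T = n"
proof -
  assume a: "mpp_instance V E n xI xG" "is_solution E n xI xG Q" "makespan n xG Q \<le> T"
  show ?thesis unfolding opt_n_iff using xx_feas[OF a] xx_obj[OF a] by blast
qed



lemma gdist_le: "feasible_path E s g p \<Longrightarrow> gdist E s g \<le> kmin p g"
proof -
  assume f: "feasible_path E s g p"
  have walk: "\<exists>j\<le>k. (s, p k) \<in> E ^^ j" for k
  proof (induction k)
    case 0
    have "p 0 = s" using f unfolding feasible_path_def by simp
    thus ?case by simp
  next
    case (Suc k)
    then obtain j where j: "j \<le> k" "(s, p k) \<in> E ^^ j" by blast
    from feas_step[OF f, of k] show ?case
    proof
      assume "p k = p (Suc k)" thus ?case using j by (metis le_SucI)
    next
      assume "(p k, p (Suc k)) \<in> E"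
      hence "(s, p (Suc k)) \<in> E ^^ Suc j" using j(2) by (rule relpow_Suc_I[rotated])
      thus ?case using j(1) by (metis Suc_le_mono)
    qed
  qed
  obtain j where j: "j \<le> kmin p g" "(s, p (kmin p g)) \<in> E ^^ j" using walk by blast
  have "p (kmin p g) = g" using feas_goal[OF f] by simp
  hence "gdist E s g \<le> j" unfolding gdist_def using j(2) by (intro Least_le) simp
  thus ?thesis using j(1) by simp
qed

lemma kmin_le_mk: "i < n \<Longrightarrow> kmin (Q i) (xG i) \<le> makespan n xG Q"
  unfolding makespan_def by (intro Max_ge) auto

lemma start_le: "is_solution E n xI xG Q \<Longrightarrow> tompp_start E n xI xG \<le> makespan n xG Q"
proof -
  assume sol: "is_solution E n xI xG Q"
  have "\<forall>a\<in>insert 0 {gdist E (xI i) (xG i) |i. i < n}. a \<le> makespan n xG Q"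
  proof
    fix a assume "a \<in> insert 0 {gdist E (xI i) (xG i) |i. i < n}"
    then consider "a = 0" | i where "i < n" "a = gdist E (xI i) (xG i)" by blast
    thus "a \<le> makespan n xG Q"
    proof cases
      case 1 thus ?thesis by simp
    next
      case 2
      have "feasible_path E (xI i) (xG i) (Q i)" using sol 2(1) unfolding is_solution_def by blast
      hence "a \<le> kmin (Q i) (xG i)" using gdist_le 2(2) by simp
      thus ?thesis using kmin_le_mk[OF 2(1), of Q xG] by simp
    qed
  qed
  thus ?thesis unfolding tompp_start_def by (subst Max_le_iff) auto
qed

lemma shortcut:
  assumes sol: "is_solution E n xI xG Q" and ab: "a < b" and bm: "b \<le> makespan n xG Q"
    and eq: "\<forall>i<n. Q i a = Q i b"
  shows "\<exists>Q'. is_solution E n xI xG Q' \<and> makespan n xG Q' < makespan n xG Q"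
proof -
  define m where "m = makespan n xG Q"
  define d where "d = b - a"
  define Q' where "Q' = (\<lambda>i t. if t < a then Q i t else Q i (t + d))"
  have feasQ: "\<And>i. i < n \<Longrightarrow> feasible_path E (xI i) (xG i) (Q i)" using sol unfolding is_solution_def by blast
  have tr: "\<exists>k'. \<forall>i<n. Q' i k = Q i k' \<and> Q' i (Suc k) = Q i (Suc k')" for k
  proof -
    consider (A) "Suc k < a" | (B) "Suc k = a" | (C) "a \<le> k" by linarith
    thus ?thesis
    proof cases
      case A thus ?thesis unfolding Q'_def by (intro exI[of _ k]) simp
    next
      case B
      have "a + d = b" unfolding d_def using ab by simp
      thus ?thesis using B eq unfolding Q'_def by (intro exI[of _ k]) auto
    next
      case C thus ?thesis unfolding Q'_def by (intro exI[of _ "k + d"]) simp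
    qed
  qed
  have d0: "0 < d" unfolding d_def using ab by simp
  have md: "a \<le> m - d" unfolding d_def m_def using bm ab by linarith
  have goal': "\<And>i t. i < n \<Longrightarrow> m - d \<le> t \<Longrightarrow> Q' i t = xG i"
  proof -
    fix i t assume i: "i < n" and t: "m - d \<le> t"
    have "Q' i t = Q i (t + d)" unfolding Q'_def using md t by simp
    moreover have "kmin (Q i) (xG i) \<le> t + d" using kmin_le_mk[OF i, of Q xG] t unfolding m_def by linarith
    ultimately show "Q' i t = xG i" using feas_goal[OF feasQ[OF i]] by simp
  qed
  have zero: "\<And>i. i < n \<Longrightarrow> Q' i 0 = xI i"
  proof -
    fix i assume i: "i < n"
    show "Q' i 0 = xI i"
    proof (cases "a = 0")
      case True
      hence "Q' i 0 = Q i b" unfolding Q'_def d_def by simp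
      also have "\<dots> = Q i 0" using eq i True by simp
      finally show ?thesis using feasQ[OF i] unfolding feasible_path_def by simp
    next
      case False thus ?thesis unfolding Q'_def using feasQ[OF i] unfolding feasible_path_def by simp
    qed
  qed
  have stepQ: "\<And>i k. i < n \<Longrightarrow> Q' i k = Q' i (Suc k) \<or> (Q' i k, Q' i (Suc k)) \<in> E"
  proof -
    fix i k assume i: "i < n"
    obtain k' where k': "\<forall>i<n. Q' i k = Q i k' \<and> Q' i (Suc k) = Q i (Suc k')" using tr by blast
    show "Q' i k = Q' i (Suc k) \<or> (Q' i k, Q' i (Suc k)) \<in> E" using feas_step[OF feasQ[OF i], of k'] k' i by simp
  qed
  have feas': "\<And>i. i < n \<Longrightarrow> feasible_path E (xI i) (xG i) (Q' i)"
    unfolding feasible_path_def using zero goal' stepQ by blast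
  have nc: "\<And>i j. i < n \<Longrightarrow> j < n \<Longrightarrow> i \<noteq> j \<Longrightarrow> \<not> collide (Q' i) (Q' j)"
  proof
    fix i j assume i: "i < n" and j: "j < n" and ij: "i \<noteq> j" and c: "collide (Q' i) (Q' j)"
    then obtain k where k: "Q' i k = Q' j k \<or> (Q' i k, Q' i (Suc k)) = (Q' j (Suc k), Q' j k)"
      unfolding collide_def by blast
    obtain k' where k': "\<forall>i<n. Q' i k = Q i k' \<and> Q' i (Suc k) = Q i (Suc k')" using tr by blast
    have "collide (Q i) (Q j)" unfolding collide_def using k k' i j by (intro exI[of _ k']) auto
    thus False using sol i j ij unfolding is_solution_def by blast
  qed
  have sol': "is_solution E n xI xG Q'" unfolding is_solution_def using feas' nc by blast
  have "\<And>i. i < n \<Longrightarrow> kmin (Q' i) (xG i) \<le> m - d"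
    unfolding kmin_def using goal' by (intro Least_le) simp
  hence "makespan n xG Q' \<le> m - d" unfolding makespan_def by (subst Max_le_iff) auto
  moreover have "m - d < m" using d0 md ab bm unfolding m_def by linarith
  ultimately show ?thesis using sol' unfolding m_def by (intro exI[of _ Q']) simp
qed

lemma bounded_sol:
  assumes inst: "mpp_instance V E n xI xG" and sol: "is_solution E n xI xG Q"
  shows "\<exists>Q. is_solution E n xI xG Q \<and> makespan n xG Q \<le> card V ^ n"
proof -
  define Pm where "Pm = (\<lambda>m. \<exists>Q. is_solution E n xI xG Q \<and> makespan n xG Q = m)"
  have "Pm (makespan n xG Q)" unfolding Pm_def using sol by blast
  hence "Pm (Least Pm)" by (rule LeastI)
  then obtain Q0 where Q0: "is_solution E n xI xG Q0" "makespan n xG Q0 = Least Pm" unfolding Pm_def by blast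
  define m0 where "m0 = Least Pm"
  have "m0 \<le> card V ^ n"
  proof (rule ccontr)
    assume big: "\<not> m0 \<le> card V ^ n"
    define c where "c = (\<lambda>t. restrict (\<lambda>i. Q0 i t) {..<n})"
    have EV: "E \<subseteq> V \<times> V" using inst unfolding mpp_instance_def simple_connected_graph_def by blast
    have finV: "finite V" using inst unfolding mpp_instance_def simple_connected_graph_def by blast
    have QV: "\<And>i t. i < n \<Longrightarrow> Q0 i t \<in> V"
    proof -
      fix i t assume i: "i < n"
      have f: "feasible_path E (xI i) (xG i) (Q0 i)" using Q0(1) i unfolding is_solution_def by blast
      have "xI i \<in> V" using inst i unfolding mpp_instance_def by simp
      thus "Q0 i t \<in> V" using feas_V[OF f EV] by simp
    qed
    have sub: "c ` {0..m0} \<subseteq> PiE {..<n} (\<lambda>_. V)"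
    proof
      fix y assume "y \<in> c ` {0..m0}"
      then obtain t where y: "y = c t" by blast
      have "restrict (\<lambda>i. Q0 i t) {..<n} \<in> PiE {..<n} (\<lambda>_. V)"
        by (rule iffD2[OF restrict_PiE_iff]) (use QV in simp)
      thus "y \<in> PiE {..<n} (\<lambda>_. V)" unfolding y c_def .
    qed
    have finP: "finite (PiE {..<n} (\<lambda>_. V))" using finV by (intro finite_PiE) simp_all
    have cardP: "card (PiE {..<n} (\<lambda>_. V)) = card V ^ n" by (simp add: card_PiE)
    have "\<not> inj_on c {0..m0}"
    proof
      assume "inj_on c {0..m0}"
      hence "card {0..m0} \<le> card (PiE {..<n} (\<lambda>_. V))" using card_inj_on_le[OF _ sub finP] by blast
      thus False using cardP big by simp
    qed
    then obtain a b where ab: "a \<in> {0..m0}" "b \<in> {0..m0}" "a \<noteq> b" "c a = c b" unfolding inj_on_def by blast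
    obtain a' b' where a'b': "a' < b'" "b' \<le> m0" "c a' = c b'"
    proof (cases "a < b")
      case True thus ?thesis using that ab by auto
    next
      case False hence "b < a" using ab(3) by simp
      thus ?thesis using that ab by (metis atLeastAtMost_iff)
    qed
    have eqs: "\<forall>i<n. Q0 i a' = Q0 i b'"
    proof (intro allI impI)
      fix i assume i: "i < n"
      have "c a' i = c b' i" using a'b'(3) by simp
      thus "Q0 i a' = Q0 i b'" unfolding c_def using i by simp
    qed
    obtain Q' where Q': "is_solution E n xI xG Q'" "makespan n xG Q' < makespan n xG Q0"
      using shortcut[OF Q0(1) a'b'(1) _ eqs] a'b'(2) Q0(2) unfolding m0_def by auto
    have "Pm (makespan n xG Q')" unfolding Pm_def using Q'(1) by blast
    hence "Least Pm \<le> makespan n xG Q'" by (rule Least_le)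
    thus False using Q'(2) Q0(2) by simp
  qed
  thus ?thesis using Q0 unfolding m0_def by (intro exI[of _ Q0]) simp
qed



theorem proposition1:
  fixes V :: "'v set" and E :: "('v \<times> 'v) set" and n :: nat and xI xG :: "nat \<Rightarrow> 'v"
  assumes "mpp_instance V E n xI xG"
  shows "((\<exists>P. is_solution E n xI xG P) \<longrightarrow>
            (\<exists>P. tompp_result V E n xI xG (Some P)) \<and>
            (\<forall>res. tompp_result V E n xI xG res \<longrightarrow>
               (\<exists>P. res = Some P \<and> is_solution E n xI xG P \<and>
                    (\<forall>Q. is_solution E n xI xG Q \<longrightarrow> makespan n xG P \<le> makespan n xG Q))))
       \<and> ((\<nexists>P. is_solution E n xI xG P) \<longrightarrow>
            tompp_result V E n xI xG None \<and>
            (\<forall>res. tompp_result V E n xI xG res \<longrightarrow> res = None))"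
proof -
  note inst = assms
  define st where "st = tompp_start E n xI xG"
  define bd where "bd = tompp_bound V n"
  have ext: "\<And>T x. ilp_opt V E n xI xG T = n \<Longrightarrow> ilp_optimal V E n xI xG T x \<Longrightarrow>
      is_solution E n xI xG (extract_paths V E n xI xG T x) \<and> makespan n xG (extract_paths V E n xI xG T x) \<le> T"
  proof -
    fix T x assume o: "ilp_opt V E n xI xG T = n" and op: "ilp_optimal V E n xI xG T x"
    have f: "ilp_feasible V E n xI xG T x" and ob: "ilp_obj n x = n" using o op unfolding ilp_optimal_def by simp_all
    show "is_solution E n xI xG (extract_paths V E n xI xG T x) \<and> makespan n xG (extract_paths V E n xI xG T x) \<le> T"
      by (rule extract_sol[OF inst f ob])
  qed
  have exopt: "\<And>T. ilp_opt V E n xI xG T = n \<Longrightarrow> \<exists>x. ilp_optimal V E n xI xG T x"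
  proof -
    fix T assume o: "ilp_opt V E n xI xG T = n"
    have "\<exists>x. ilp_feasible V E n xI xG T x \<and> ilp_obj n x = n" using o opt_n_iff[of V E n xI xG T] by simp
    then obtain x where "ilp_feasible V E n xI xG T x" "ilp_obj n x = n" by blast
    thus "\<exists>x. ilp_optimal V E n xI xG T x" using o unfolding ilp_optimal_def by auto
  qed
  have part1: "(\<exists>P. is_solution E n xI xG P) \<Longrightarrow>
            (\<exists>P. tompp_result V E n xI xG (Some P)) \<and>
            (\<forall>res. tompp_result V E n xI xG res \<longrightarrow>
               (\<exists>P. res = Some P \<and> is_solution E n xI xG P \<and>
                    (\<forall>Q. is_solution E n xI xG Q \<longrightarrow> makespan n xG P \<le> makespan n xG Q)))"
  proof -
    assume "\<exists>P. is_solution E n xI xG P"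
    then obtain Q0 where "is_solution E n xI xG Q0" by blast
    then obtain Q where Q: "is_solution E n xI xG Q" "makespan n xG Q \<le> card V ^ n"
      using bounded_sol[OF inst \<open>is_solution E n xI xG Q0\<close>] by blast
    define m where "m = makespan n xG Q"
    have stm: "st \<le> m" unfolding st_def m_def by (rule start_le[OF Q(1)])
    have mbd: "m \<le> bd" unfolding m_def bd_def tompp_bound_def using Q(2) .
    have optm: "ilp_opt V E n xI xG m = n" unfolding m_def by (rule sol_opt[OF inst Q(1) order_refl])
    define Pt where "Pt = (\<lambda>T. st \<le> T \<and> ilp_opt V E n xI xG T = n)"
    have "Pt m" unfolding Pt_def using stm optm by simp
    hence PT0: "Pt (Least Pt)" by (rule LeastI)
    have T0m: "Least Pt \<le> m" using \<open>Pt m\<close> by (rule Least_le)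
    have below: "\<forall>T'. st \<le> T' \<and> T' < Least Pt \<longrightarrow> ilp_opt V E n xI xG T' \<noteq> n"
    proof (intro allI impI)
      fix T' assume T': "st \<le> T' \<and> T' < Least Pt"
      hence "\<not> Pt T'" using not_less_Least[of T' Pt] by simp
      thus "ilp_opt V E n xI xG T' \<noteq> n" using T' unfolding Pt_def by simp
    qed
    have PTn: "ilp_opt V E n xI xG (Least Pt) = n" using PT0 unfolding Pt_def by simp
    obtain x where x: "ilp_optimal V E n xI xG (Least Pt) x" using exopt[OF PTn] by blast
    have r1: "tompp_result V E n xI xG (Some (extract_paths V E n xI xG (Least Pt) x))"
      unfolding tompp_result_def option.case
    proof (rule exI[of _ "Least Pt"], rule exI[of _ x], intro conjI)
      show "tompp_start E n xI xG \<le> Least Pt" using PT0 unfolding Pt_def st_def by simp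
      show "Least Pt \<le> tompp_bound V n" using T0m mbd unfolding bd_def by simp
      show "\<forall>T'. tompp_start E n xI xG \<le> T' \<and> T' < Least Pt \<longrightarrow> ilp_opt V E n xI xG T' \<noteq> n"
        using below unfolding st_def .
      show "ilp_opt V E n xI xG (Least Pt) = n" using PT0 unfolding Pt_def by simp
      show "ilp_optimal V E n xI xG (Least Pt) x" by (rule x)
      show "extract_paths V E n xI xG (Least Pt) x = extract_paths V E n xI xG (Least Pt) x" by (rule refl)
    qed
    have r2: "\<exists>P. res = Some P \<and> is_solution E n xI xG P \<and>
                    (\<forall>Q. is_solution E n xI xG Q \<longrightarrow> makespan n xG P \<le> makespan n xG Q)"
      if r: "tompp_result V E n xI xG res" for res
    proof (cases res)
      case None
      hence "ilp_opt V E n xI xG m \<noteq> n" using r stm mbd unfolding tompp_result_def st_def bd_def by simp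
      thus ?thesis using optm by simp
    next
      case (Some P)
      then obtain T y where Ty: "st \<le> T" "T \<le> bd"
        "\<forall>T'. st \<le> T' \<and> T' < T \<longrightarrow> ilp_opt V E n xI xG T' \<noteq> n"
        "ilp_opt V E n xI xG T = n" "ilp_optimal V E n xI xG T y" "P = extract_paths V E n xI xG T y"
        using r unfolding tompp_result_def st_def bd_def by auto
      have sP: "is_solution E n xI xG P" "makespan n xG P \<le> T" using ext[OF Ty(4) Ty(5)] Ty(6) by simp_all
      have minP: "makespan n xG P \<le> makespan n xG Q'" if Q': "is_solution E n xI xG Q'" for Q'
      proof (rule ccontr)
        assume "\<not> makespan n xG P \<le> makespan n xG Q'"
        hence lt: "makespan n xG Q' < T" using sP(2) by simp
        have "st \<le> makespan n xG Q'" unfolding st_def by (rule start_le[OF Q'])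
        moreover have "ilp_opt V E n xI xG (makespan n xG Q') = n" by (rule sol_opt[OF inst Q' order_refl])
        ultimately show False using Ty(3) lt by blast
      qed
      show ?thesis using Some sP(1) minP by blast
    qed
    show ?thesis using r1 r2 by blast
  qed
  have part2: "\<not> (\<exists>P. is_solution E n xI xG P) \<Longrightarrow>
            tompp_result V E n xI xG None \<and>
            (\<forall>res. tompp_result V E n xI xG res \<longrightarrow> res = None)"
  proof -
    assume ns: "\<not> (\<exists>P. is_solution E n xI xG P)"
    have noopt: "ilp_opt V E n xI xG T \<noteq> n" for T
    proof
      assume o: "ilp_opt V E n xI xG T = n"
      obtain x where "ilp_optimal V E n xI xG T x" using exopt[OF o] by blast
      thus False using ext[OF o] ns by blast
    qed
    have "tompp_result V E n xI xG None" unfolding tompp_result_def using noopt by simp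
    moreover have "res = None" if r: "tompp_result V E n xI xG res" for res
    proof (cases res)
      case (Some P)
      thus ?thesis using r noopt unfolding tompp_result_def by auto
    qed simp
    ultimately show ?thesis by blast
  qed
  show ?thesis using part1 part2 by blast
qed

end
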